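(* Let $G$ be a group acting on a set $X$ and $Y$ a finite subset of $X$ such that $\mu=\inf_{A\in\mathcal{P}_{\mathrm{fin}}(G)\setminus\{\emptyset\}}\frac{|A\cdot Y|}{|A|}>0$. Then for any $\lambda\in\,]0,\mu]$ and any nonempty finite subset $A_0$ of $G$ there exists a subgroup $H$ of $G$ containing $G_Y$ such that \[\lambda\max_{A\subset G,\ A\cdot Y=A_0\cdot Y}|A|+|Y|\leq\lambda|H|+|A_0\cdot Y|.\]
   Context: $\mathcal{P}_{\mathrm{fin}}(G)$ is the set of finite subsets of $G$; $A\cdot Y=\{a\cdot y\mid a\in A,y\in Y\}$; $G_Y=\{g\in G\mid g\cdot Y=Y\}$. *)

theory Defs
  imports "HOL-Algebra.Group_Action" Complex_Main
begin

definition set_act :: "('g \<Rightarrow> 'x \<Rightarrow> 'x) \<Rightarrow> 'g set \<Rightarrow> 'x set \<Rightarrow> 'x set" where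
  "set_act \<phi> A Y = {\<phi> a y | a y. a \<in> A \<and> y \<in> Y}"

definition set_stab :: "('g, 'c) monoid_scheme \<Rightarrow> ('g \<Rightarrow> 'x \<Rightarrow> 'x) \<Rightarrow> 'x set \<Rightarrow> 'g set" where
  "set_stab G \<phi> Y = {g \<in> carrier G. set_act \<phi> {g} Y = Y}"

definition expansion_inf :: "('g, 'c) monoid_scheme \<Rightarrow> ('g \<Rightarrow> 'x \<Rightarrow> 'x) \<Rightarrow> 'x set \<Rightarrow> real" where
  "expansion_inf G \<phi> Y = Inf {real (card (set_act \<phi> A Y)) / real (card A) | A.
       A \<subseteq> carrier G \<and> finite A \<and> A \<noteq> {}}"

end

theory Submission
  imports Defs
begin

lemma limit_trick:
  fixes N :: nat and c lam :: real and S :: "nat set"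
  assumes c: "0 \<le> c" and lam: "0 < lam"
    and hyp: "\<forall>l. 0 < l \<and> l < lam \<longrightarrow> (\<exists>h\<in>S. l * real N \<le> l * real h + c)"
  shows "\<exists>h\<in>S. lam * real N \<le> lam * real h + c"
proof (rule ccontr)
  assume "\<not> ?thesis"
  then have nc: "\<forall>h\<in>S. lam * real h + c < lam * real N" by auto
  define V where "V = (\<lambda>h. c / (real N - real h)) ` {..<N}"
  define m0 where "m0 = Max (insert 0 {v\<in>V. v < lam})"
  have finV: "finite (insert 0 {v\<in>V. v < lam})" unfolding V_def by auto
  have m0in: "m0 \<in> insert 0 {v\<in>V. v < lam}" unfolding m0_def using finV
    by (intro Max_in) auto
  have m0lt: "m0 < lam" using m0in lam by auto
  have m0ge: "0 \<le> m0" unfolding m0_def using finV by (intro Max_ge) auto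
  define l where "l = (m0 + lam) / 2"
  have "0 < l" "l < lam" using m0lt m0ge lam unfolding l_def by auto
  then obtain h where h: "h \<in> S" "l * real N \<le> l * real h + c" using hyp by blast
  have hl: "lam * real h + c < lam * real N" using nc h by auto
  then have "lam * real h < lam * real N" using c by linarith
  then have hN: "h < N" using lam by auto
  then have pos: "0 < real N - real h" by auto
  define v where "v = c / (real N - real h)"
  have "v < lam" unfolding v_def using hl pos by (simp add: divide_less_eq algebra_simps)
  moreover have "v \<in> V" unfolding v_def V_def using hN by auto
  ultimately have "v \<le> m0" unfolding m0_def using finV by (intro Max_ge) auto
  moreover have "l \<le> v" unfolding v_def using h(2) pos by (simp add: le_divide_eq algebra_simps)
  moreover have "m0 < l" using m0lt unfolding l_def by auto
  ultimately show False by auto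
qed

context group_action
begin

lemma sa_mono: "A \<subseteq> B \<Longrightarrow> set_act \<phi> A Y \<subseteq> set_act \<phi> B Y"
  unfolding set_act_def by blast

lemma sa_Un: "set_act \<phi> (A \<union> B) Y = set_act \<phi> A Y \<union> set_act \<phi> B Y"
  unfolding set_act_def by blast

lemma sa_Int: "set_act \<phi> (A \<inter> B) Y \<subseteq> set_act \<phi> A Y \<inter> set_act \<phi> B Y"
  unfolding set_act_def by blast

lemma sa_img: "set_act \<phi> A Y = (\<lambda>(a,y). \<phi> a y) ` (A \<times> Y)"
  unfolding set_act_def by auto

lemma sa_fin: "finite A \<Longrightarrow> finite Y \<Longrightarrow> finite (set_act \<phi> A Y)"
  unfolding sa_img by auto

lemma sa_card: "finite A \<Longrightarrow> finite Y \<Longrightarrow> card (set_act \<phi> A Y) \<le> card A * card Y"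
  unfolding sa_img by (rule order_trans[OF card_image_le]) (auto simp: card_cartesian_product)

lemma sa_sub: "A \<subseteq> carrier G \<Longrightarrow> Y \<subseteq> E \<Longrightarrow> set_act \<phi> A Y \<subseteq> E"
  unfolding set_act_def using surj_prop by blast

lemma sa_one: "Y \<subseteq> E \<Longrightarrow> set_act \<phi> {\<one>} Y = Y"
proof -
  assume Y: "Y \<subseteq> E"
  have "\<And>y. y \<in> Y \<Longrightarrow> \<phi> \<one> y = y" using id_eq_one[symmetric] Y by auto
  then show ?thesis unfolding set_act_def by force
qed

lemma sa_transl:
  assumes "g \<in> carrier G" "A \<subseteq> carrier G" "Y \<subseteq> E"
  shows "set_act \<phi> ((\<lambda>a. g \<otimes> a) ` A) Y = \<phi> g ` set_act \<phi> A Y"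
proof (intro equalityI subsetI)
  fix z assume "z \<in> set_act \<phi> ((\<lambda>a. g \<otimes> a) ` A) Y"
  then obtain a y where ay: "a \<in> A" "y \<in> Y" "z = \<phi> (g \<otimes> a) y" unfolding set_act_def by auto
  have "z = \<phi> g (\<phi> a y)" using composition_rule[of y g a] ay assms by (auto simp: subset_iff)
  then show "z \<in> \<phi> g ` set_act \<phi> A Y" using ay unfolding set_act_def by blast
next
  fix z assume "z \<in> \<phi> g ` set_act \<phi> A Y"
  then obtain a y where ay: "a \<in> A" "y \<in> Y" "z = \<phi> g (\<phi> a y)" unfolding set_act_def by auto
  have "z = \<phi> (g \<otimes> a) y" using composition_rule[of y g a] ay assms by (auto simp: subset_iff)
  then show "z \<in> set_act \<phi> ((\<lambda>a. g \<otimes> a) ` A) Y" using ay unfolding set_act_def by blast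
qed

lemma sa_transl_card:
  assumes "g \<in> carrier G" "A \<subseteq> carrier G" "Y \<subseteq> E"
  shows "card (set_act \<phi> ((\<lambda>a. g \<otimes> a) ` A) Y) = card (set_act \<phi> A Y)"
  unfolding sa_transl[OF assms]
  by (rule card_image, rule inj_on_subset[OF inj_prop[OF assms(1)] sa_sub[OF assms(2,3)]])


lemma strict:
  assumes grp: "group G" and Y: "Y \<subseteq> E" "finite Y"
    and mu: "\<And>A. A \<subseteq> carrier G \<Longrightarrow> finite A \<Longrightarrow> A \<noteq> {} \<Longrightarrow> mu * real (card A) \<le> real (card (set_act \<phi> A Y))"
    and lam: "0 < lam" "lam < mu"
  shows "\<exists>H. subgroup H G \<and> finite H \<and> set_stab G \<phi> Y \<subseteq> H \<and>
     (\<forall>A. A \<subseteq> carrier G \<and> finite A \<and> A \<noteq> {} \<longrightarrow>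
        real (card Y) - lam * real (card H) \<le> real (card (set_act \<phi> A Y)) - lam * real (card A))"
proof -
  interpret grp: group G by (rule grp)
  define D where "D = {A. A \<subseteq> carrier G \<and> finite A \<and> A \<noteq> {}}"
  define f where "f A = real (card (set_act \<phi> A Y)) - lam * real (card A)" for A
  have oneD: "{\<one>} \<in> D" unfolding D_def by auto
  define C where "C = f {\<one>} / (mu - lam)"
  have bound: "real (card A) \<le> C" if "A \<in> D" "f A \<le> f {\<one>}" for A
  proof -
    have "mu * real (card A) \<le> real (card (set_act \<phi> A Y))" using mu that(1) unfolding D_def by auto
    then have "(mu - lam) * real (card A) \<le> f {\<one>}" using that(2) unfolding f_def by (simp add: algebra_simps)
    then show ?thesis unfolding C_def using lam by (simp add: le_divide_eq mult.commute)
  qed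
  define K where "K = nat \<lceil>C\<rceil> * (card Y + 1)"
  have sub: "f ` {A\<in>D. f A \<le> f {\<one>}} \<subseteq> (\<lambda>(n,m). real n - lam * real m) ` ({..K} \<times> {..K})"
  proof
    fix z assume "z \<in> f ` {A\<in>D. f A \<le> f {\<one>}}"
    then obtain A where A: "A \<in> D" "f A \<le> f {\<one>}" "z = f A" by auto
    have c1: "card A \<le> nat \<lceil>C\<rceil>" using bound[OF A(1,2)] by linarith
    have "nat \<lceil>C\<rceil> \<le> K" unfolding K_def by simp
    then have cA: "card A \<le> K" using c1 by linarith
    have "card (set_act \<phi> A Y) \<le> card A * card Y" using sa_card A(1) Y unfolding D_def by auto
    also have "\<dots> \<le> nat \<lceil>C\<rceil> * card Y" using c1 by simp
    also have "\<dots> \<le> K" unfolding K_def by simp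
    finally have "card (set_act \<phi> A Y) \<le> K" .
    then show "z \<in> (\<lambda>(n,m). real n - lam * real m) ` ({..K} \<times> {..K})"
      using cA unfolding A(3) f_def
      by (intro rev_image_eqI[of "(card (set_act \<phi> A Y), card A)"]) auto
  qed
  define W where "W = f ` {A\<in>D. f A \<le> f {\<one>}}"
  have finW: "finite W" unfolding W_def by (rule finite_subset[OF sub]) auto
  have neW: "W \<noteq> {}" unfolding W_def using oneD by auto
  define k where "k = Min W"
  have kmin: "k \<le> f A" if "A \<in> D" for A
  proof (cases "f A \<le> f {\<one>}")
    case True then show ?thesis unfolding k_def W_def using finW that W_def by (intro Min_le) auto
  next
    case False
    have "k \<le> f {\<one>}" unfolding k_def using finW oneD W_def by (intro Min_le) auto
    then show ?thesis using False by auto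
  qed
  have "k \<in> W" unfolding k_def using finW neW by (rule Min_in)
  then obtain A' where A': "A' \<in> D \<and> f A' = k" unfolding W_def by auto
  obtain A1 where A1: "A1 \<in> D \<and> f A1 = k" and A1min: "\<forall>B. B \<in> D \<and> f B = k \<longrightarrow> card A1 \<le> card B"
    using ex_has_least_nat[where P="\<lambda>B. B \<in> D \<and> f B = k" and m=card, OF A'] by blast
  have transD: "(\<lambda>x. g \<otimes> x) ` A \<in> D" if "g \<in> carrier G" "A \<in> D" for g A
    using that unfolding D_def by auto
  have transcard: "card ((\<lambda>x. g \<otimes> x) ` A) = card A" if "g \<in> carrier G" "A \<in> D" for g A
  proof (rule card_image, rule inj_onI)
    fix x y assume xy: "x \<in> A" "y \<in> A" "g \<otimes> x = g \<otimes> y"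
    have "x \<in> carrier G" "y \<in> carrier G" using xy that unfolding D_def by auto
    moreover have "inv g \<otimes> (g \<otimes> x) = inv g \<otimes> (g \<otimes> y)" using xy(3) by simp
    ultimately show "x = y" using that(1) by (simp add: grp.m_assoc[symmetric])
  qed
  have transf: "f ((\<lambda>x. g \<otimes> x) ` A) = f A" if "g \<in> carrier G" "A \<in> D" for g A
    unfolding f_def using sa_transl_card[OF that(1) _ Y(1)] that transcard unfolding D_def by auto
  obtain a where a: "a \<in> A1" using A1 unfolding D_def by auto
  have aG: "a \<in> carrier G" using a A1 unfolding D_def by auto
  define H where "H = (\<lambda>x. inv a \<otimes> x) ` A1"
  have HD: "H \<in> D" unfolding H_def using transD aG A1 by auto
  have fH: "f H = k" unfolding H_def using transf aG A1 by auto
  have cH: "card H = card A1" unfolding H_def using transcard aG A1 by auto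
  have Hmin: "card H \<le> card B" if "B \<in> D" "f B = k" for B using A1min that cH by auto
  have oneH: "\<one> \<in> H" unfolding H_def using a aG by force
  have HG: "H \<subseteq> carrier G" and finH: "finite H" using HD unfolding D_def by auto
  have submod: "f (A \<union> B) + f (A \<inter> B) \<le> f A + f B" if "A \<in> D" "B \<in> D" for A B
  proof -
    have fA: "finite A" "finite B" using that unfolding D_def by auto
    have fs: "finite (set_act \<phi> A Y)" "finite (set_act \<phi> B Y)" using sa_fin fA Y by auto
    have "card (set_act \<phi> (A \<inter> B) Y) \<le> card (set_act \<phi> A Y \<inter> set_act \<phi> B Y)"
      using sa_Int fs by (intro card_mono) auto
    moreover have "card (set_act \<phi> A Y \<union> set_act \<phi> B Y) + card (set_act \<phi> A Y \<inter> set_act \<phi> B Y)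
       = card (set_act \<phi> A Y) + card (set_act \<phi> B Y)" using card_Un_Int[OF fs] by simp
    moreover have "card (A \<union> B) + card (A \<inter> B) = card A + card B" using card_Un_Int[OF fA] by simp
    ultimately have r1: "real (card (set_act \<phi> (A \<union> B) Y)) + real (card (set_act \<phi> (A \<inter> B) Y))
        \<le> real (card (set_act \<phi> A Y)) + real (card (set_act \<phi> B Y))"
      and r2: "real (card (A \<union> B)) + real (card (A \<inter> B)) = real (card A) + real (card B)"
      unfolding sa_Un by linarith+
    have "lam * real (card (A \<union> B)) + lam * real (card (A \<inter> B)) = lam * real (card A) + lam * real (card B)"
      using r2 by (simp add: distrib_left[symmetric])
    then show ?thesis unfolding f_def using r1 by linarith
  qed
  have closed: "(\<lambda>x. g \<otimes> x) ` H = H" if g: "g \<in> H" for g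
  proof -
    define gH where "gH = (\<lambda>x. g \<otimes> x) ` H"
    have gG: "g \<in> carrier G" using g HG by auto
    have gHD: "gH \<in> D" unfolding gH_def using transD gG HD by auto
    have fgH: "f gH = k" unfolding gH_def using transf gG HD fH by auto
    have cgH: "card gH = card H" unfolding gH_def using transcard gG HD by auto
    have ggH: "g \<in> gH" unfolding gH_def using oneH gG by force
    have IntD: "H \<inter> gH \<in> D" using HD gHD g ggH unfolding D_def by auto
    have UnD: "H \<union> gH \<in> D" using HD gHD unfolding D_def by auto
    have "f (H \<union> gH) + f (H \<inter> gH) \<le> f H + f gH" using submod HD gHD by auto
    moreover have "k \<le> f (H \<union> gH)" "k \<le> f (H \<inter> gH)" using kmin UnD IntD by auto
    ultimately have "f (H \<inter> gH) = k" using fH fgH by auto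
    then have "card H \<le> card (H \<inter> gH)" using Hmin IntD by auto
    then have "H \<inter> gH = H" by (rule card_seteq[OF finH Int_lower1])
    then have "H \<subseteq> gH" by auto
    moreover have "finite gH" using gHD unfolding D_def by auto
    ultimately have "H = gH" using cgH card_seteq[of gH H] by simp
    then show ?thesis unfolding gH_def by auto
  qed
  have subg: "subgroup H G"
  proof (rule grp.subgroupI)
    show "H \<subseteq> carrier G" by (rule HG)
    show "H \<noteq> {}" using oneH by auto
  next
    fix g assume g: "g \<in> H"
    then have "\<one> \<in> (\<lambda>x. g \<otimes> x) ` H" using closed oneH by auto
    then obtain h where h: "h \<in> H" "\<one> = g \<otimes> h" by auto
    have gG: "g \<in> carrier G" and hG: "h \<in> carrier G" using h g HG by auto
    have "inv g = inv g \<otimes> (g \<otimes> h)" using h(2) gG by (metis grp.inv_closed grp.r_one)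
    also have "\<dots> = h" using gG hG by (simp add: grp.m_assoc[symmetric])
    finally have "inv g = h" .
    then show "inv g \<in> H" using h by auto
  next
    fix g h assume "g \<in> H" "h \<in> H"
    then show "g \<otimes> h \<in> H" using closed by blast
  qed
  have HYsub: "Y \<subseteq> set_act \<phi> H Y" using sa_mono[of "{\<one>}" H] oneH sa_one Y by auto
  have stab: "set_stab G \<phi> Y \<subseteq> H"
  proof
    fix s assume "s \<in> set_stab G \<phi> Y"
    then have s: "s \<in> carrier G" "set_act \<phi> {s} Y = Y" unfolding set_stab_def by auto
    have D2: "H \<union> {s} \<in> D" using HD s unfolding D_def by auto
    have "set_act \<phi> (H \<union> {s}) Y = set_act \<phi> H Y" unfolding sa_Un s(2) using HYsub by auto
    then have "f (H \<union> {s}) = real (card (set_act \<phi> H Y)) - lam * real (card (H \<union> {s}))"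
      unfolding f_def by simp
    moreover have "k \<le> f (H \<union> {s})" using kmin D2 by auto
    ultimately have "lam * real (card (H \<union> {s})) \<le> lam * real (card H)" using fH unfolding f_def by linarith
    then have "card (H \<union> {s}) \<le> card H" using lam by (simp add: mult_le_cancel_left)
    then show "s \<in> H"
    proof (rule contrapos_pp)
      assume "s \<notin> H"
      then have "card (H \<union> {s}) = Suc (card H)" using finH by simp
      then show "\<not> card (H \<union> {s}) \<le> card H" by simp
    qed
  qed
  have "card Y \<le> card (set_act \<phi> H Y)" using HYsub sa_fin finH Y by (intro card_mono) auto
  then have Yk: "real (card Y) - lam * real (card H) \<le> k" using fH unfolding f_def by auto
  show ?thesis
  proof (intro exI[of _ H] conjI subg finH stab allI impI)
    fix A assume "A \<subseteq> carrier G \<and> finite A \<and> A \<noteq> {}"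
    then have "k \<le> f A" using kmin unfolding D_def by auto
    then show "real (card Y) - lam * real (card H) \<le> real (card (set_act \<phi> A Y)) - lam * real (card A)"
      using Yk unfolding f_def by linarith
  qed
qed

end


theorem mainTheorem9:
  fixes G (structure) and X :: "'x set" and \<phi> :: "'g \<Rightarrow> 'x \<Rightarrow> 'x"
    and Y :: "'x set" and A0 :: "'g set" and lam :: real
  assumes "group G"
    and "group_action G X \<phi>"
    and "Y \<subseteq> X" and "finite Y"
    and "expansion_inf G \<phi> Y > 0"
    and "0 < lam" and "lam \<le> expansion_inf G \<phi> Y"
    and "A0 \<subseteq> carrier G" and "finite A0" and "A0 \<noteq> {}"
  shows "\<exists>H. subgroup H G \<and> finite H \<and> set_stab G \<phi> Y \<subseteq> H \<and>
     lam * real (Max {card A | A. A \<subseteq> carrier G \<and> set_act \<phi> A Y = set_act \<phi> A0 Y})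
       + real (card Y)
     \<le> lam * real (card H) + real (card (set_act \<phi> A0 Y))"
proof -
  interpret grp: group G by fact
  interpret act: group_action G X \<phi> by fact
  define mu where "mu = expansion_inf G \<phi> Y"
  have mupos: "0 < mu" and lammu: "lam \<le> mu" using assms unfolding mu_def by auto
  have mule: "mu * real (card A) \<le> real (card (set_act \<phi> A Y))"
    if "A \<subseteq> carrier G" "finite A" "A \<noteq> {}" for A
  proof -
    have "mu \<le> real (card (set_act \<phi> A Y)) / real (card A)"
      unfolding mu_def expansion_inf_def
    proof (rule cInf_lower)
      show "real (card (set_act \<phi> A Y)) / real (card A) \<in> {real (card (set_act \<phi> A Y)) / real (card A) | A.
       A \<subseteq> carrier G \<and> finite A \<and> A \<noteq> {}}" using that by blast
      show "bdd_below {real (card (set_act \<phi> A Y)) / real (card A) | A.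
       A \<subseteq> carrier G \<and> finite A \<and> A \<noteq> {}}"
        by (rule bdd_belowI[where m=0]) auto
    qed
    moreover have "0 < real (card A)" using that by (simp add: card_gt_0_iff)
    ultimately show ?thesis by (simp add: le_divide_eq)
  qed
  define B where "B = set_act \<phi> A0 Y"
  have finB: "finite B" unfolding B_def using act.sa_fin assms by auto
  define As where "As = {g \<in> carrier G. \<forall>y\<in>Y. \<phi> g y \<in> B}"
  have A0As: "A0 \<subseteq> As" unfolding As_def B_def set_act_def using assms(8) by auto
  have AsB: "set_act \<phi> As Y \<subseteq> B" unfolding As_def set_act_def by auto
  have finAs: "finite As"
  proof (rule ccontr)
    assume "infinite As"
    then obtain F where F: "F \<subseteq> As" "finite F" "card F = nat \<lfloor>real (card B) / mu\<rfloor> + 1"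
      using infinite_arbitrarily_large by blast
    have FG: "F \<subseteq> carrier G" using F unfolding As_def by auto
    have Fne: "F \<noteq> {}" using F by auto
    have "set_act \<phi> F Y \<subseteq> B" using act.sa_mono[OF F(1)] AsB by auto
    then have "card (set_act \<phi> F Y) \<le> card B" using finB by (rule card_mono[rotated])
    then have "mu * real (card F) \<le> real (card B)" using mule[OF FG F(2) Fne] by linarith
    then have "real (card F) \<le> real (card B) / mu" using mupos by (simp add: le_divide_eq mult.commute)
    moreover have "real (card B) / mu < real (card F)" using F(3) mupos
      by (simp add: divide_nonneg_pos) linarith
    ultimately show False by auto
  qed
  have AsG: "As \<subseteq> carrier G" unfolding As_def by auto
  have Asne: "As \<noteq> {}" using A0As assms(10) by auto
  define N where "N = card As"
  have MaxN: "Max {card A | A. A \<subseteq> carrier G \<and> set_act \<phi> A Y = set_act \<phi> A0 Y} \<le> N"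
  proof (rule Max.boundedI)
    have "{card A | A. A \<subseteq> carrier G \<and> set_act \<phi> A Y = set_act \<phi> A0 Y} \<subseteq> {..N}"
    proof
      fix n assume "n \<in> {card A | A. A \<subseteq> carrier G \<and> set_act \<phi> A Y = set_act \<phi> A0 Y}"
      then obtain A where A: "A \<subseteq> carrier G" "set_act \<phi> A Y = B" "n = card A" unfolding B_def by auto
      have "A \<subseteq> As" unfolding As_def using A(1) A(2)[symmetric] unfolding set_act_def by blast
      then show "n \<in> {..N}" unfolding N_def using A(3) finAs card_mono by auto
    qed
    then show "finite {card A | A. A \<subseteq> carrier G \<and> set_act \<phi> A Y = set_act \<phi> A0 Y}"
      using finite_subset by blast
    show "{card A | A. A \<subseteq> carrier G \<and> set_act \<phi> A Y = set_act \<phi> A0 Y} \<noteq> {}" using assms(8) by auto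
    fix n assume "n \<in> {card A | A. A \<subseteq> carrier G \<and> set_act \<phi> A Y = set_act \<phi> A0 Y}"
    then show "n \<le> N" using \<open>_ \<subseteq> {..N}\<close> by auto
  qed
  obtain a where a: "a \<in> A0" using assms(10) by auto
  have aG: "a \<in> carrier G" using a assms(8) by auto
  have aYB: "\<phi> a ` Y \<subseteq> B" unfolding B_def set_act_def using a by auto
  have ca: "card (\<phi> a ` Y) = card Y"
    by (rule card_image[OF inj_on_subset[OF act.inj_prop[OF aG] assms(3)]])
  have YB: "card Y \<le> card B" using card_mono[OF finB aYB] ca by simp
  define S where "S = card ` {H. subgroup H G \<and> finite H \<and> set_stab G \<phi> Y \<subseteq> H}"
  define c where "c = real (card B) - real (card Y)"
  have c0: "0 \<le> c" unfolding c_def using YB by simp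
  have hyp: "\<forall>l. 0 < l \<and> l < lam \<longrightarrow> (\<exists>h\<in>S. l * real N \<le> l * real h + c)"
  proof (intro allI impI)
    fix l assume l: "0 < l \<and> l < lam"
    then have "l < mu" using lammu by auto
    have "\<exists>H. subgroup H G \<and> finite H \<and> set_stab G \<phi> Y \<subseteq> H \<and>
     (\<forall>A. A \<subseteq> carrier G \<and> finite A \<and> A \<noteq> {} \<longrightarrow>
        real (card Y) - l * real (card H) \<le> real (card (set_act \<phi> A Y)) - l * real (card A))"
      by (rule act.strict[OF assms(1) assms(3) assms(4), of mu l]) (use mule l \<open>l < mu\<close> in auto)
    then obtain H where H: "subgroup H G" "finite H" "set_stab G \<phi> Y \<subseteq> H"
      and Hb: "\<forall>A. A \<subseteq> carrier G \<and> finite A \<and> A \<noteq> {} \<longrightarrow>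
        real (card Y) - l * real (card H) \<le> real (card (set_act \<phi> A Y)) - l * real (card A)"
      by blast
    have "real (card Y) - l * real (card H) \<le> real (card (set_act \<phi> As Y)) - l * real N"
      using Hb AsG finAs Asne unfolding N_def by auto
    moreover have "card (set_act \<phi> As Y) \<le> card B" using AsB finB by (rule card_mono[rotated])
    ultimately have "l * real N \<le> l * real (card H) + c" unfolding c_def by linarith
    moreover have "card H \<in> S" unfolding S_def using H by auto
    ultimately show "\<exists>h\<in>S. l * real N \<le> l * real h + c" by auto
  qed
  obtain h where h: "h \<in> S" "lam * real N \<le> lam * real h + c"
    using limit_trick[OF c0 assms(6) hyp] by blast
  then obtain H where H: "subgroup H G" "finite H" "set_stab G \<phi> Y \<subseteq> H" "h = card H"
    unfolding S_def by auto
  define M where "M = Max {card A | A. A \<subseteq> carrier G \<and> set_act \<phi> A Y = set_act \<phi> A0 Y}"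
  have "M \<le> N" using MaxN unfolding M_def .
  then have "lam * real M \<le> lam * real N"
    using assms(6) by (simp add: mult_le_cancel_left)
  then have fin: "lam * real M + real (card Y) \<le> lam * real (card H) + real (card B)"
    using h(2) unfolding H(4) c_def by linarith
  show ?thesis using H(1,2,3) fin unfolding M_def B_def by blast
qed

end
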